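(* Let $\mathbb{F}$ be a field, $m,k,d,d'\in\mathbb{N}$, and $G,K,L$ finite subsets of $\mathbb{F}$ with $K\subseteq L$, $d'\ge|G|-2$ and $|K|=d+1$. Let $S\subseteq\mathbb{F}^{m+k}$ be a finite set and suppose there exist matrices $C\in\mathbb{F}^{L^m\times\ell}$ and $D\in\mathbb{F}^{S\times\ell}$ such that for all $Z\in\mathbb{F}^{\le d,\le d'}[X_1,\dots,X_m,Y_1,\dots,Y_k]$ and all $i\in\{1,\dots,\ell\}$, $$\sum_{\vec\alpha\in L^m}C_{\vec\alpha,i}\sum_{\vec y\in G^k}Z(\vec\alpha,\vec y)=\sum_{\vec q\in S}D_{\vec q,i}\,Z(\vec q).$$ Then $|S|\ge \mathrm{rank}(BC)\cdot\big(\min\{d'-|G|+2,\ |G|\}\big)^k$, where $B\in\mathbb{F}^{K^m\times L^m}$ is the matrix such that for every $\vec\alpha\in L^m$ and every polynomial $p\in\mathbb{F}[X_1,\dots,X_m]$ of individual degree at most $d$, $p(\vec\alpha)=\sum_{\vec\beta\in K^m}B_{\vec\beta,\vec\alpha}\,p(\vec\beta)$.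
   Context: $\mathbb{F}^{\le d,\le d'}[X_1,\dots,X_m,Y_1,\dots,Y_k]$ denotes the set of $(m+k)$-variate polynomials over $\mathbb{F}$ of individual degree at most $d$ in each of $X_1,\dots,X_m$ and at most $d'$ in each of $Y_1,\dots,Y_k$. Matrices indexed by sets $A\times B$ have rows indexed by $A$ and columns by $B$. *)

theory Defs
  imports Main "HOL-Library.FuncSet"
begin

text \<open>Points of F^n are functions nat => 'a, extensional on {0..<n}
  (i.e. elements of {0..<n} ->E UNIV).  Coordinates 0..m-1 are the X variables,
  coordinates m..m+k-1 are the Y variables.\<close>

definition exps :: "nat \<Rightarrow> nat \<Rightarrow> nat \<Rightarrow> nat \<Rightarrow> (nat \<Rightarrow> nat) set" where
  "exps m k d d' = {e. (\<forall>i<m. e i \<le> d) \<and> (\<forall>i. m \<le> i \<and> i < m + k \<longrightarrow> e i \<le> d')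
                        \<and> (\<forall>i. m + k \<le> i \<longrightarrow> e i = 0)}"

text \<open>A polynomial is represented by its coefficient function on exponent vectors.
  ipolys m k d d' is F^{<=d,<=d'}[X_1..X_m,Y_1..Y_k].\<close>
definition ipolys :: "nat \<Rightarrow> nat \<Rightarrow> nat \<Rightarrow> nat \<Rightarrow> ((nat \<Rightarrow> nat) \<Rightarrow> 'a::field) set" where
  "ipolys m k d d' = {c. \<forall>e. c e \<noteq> 0 \<longrightarrow> e \<in> exps m k d d'}"

definition peval :: "nat \<Rightarrow> ((nat \<Rightarrow> nat) \<Rightarrow> 'a::field) \<Rightarrow> (nat \<Rightarrow> 'a) \<Rightarrow> 'a" where
  "peval n c x = (\<Sum>e\<in>{e. c e \<noteq> 0}. c e * (\<Prod>i<n. x i ^ e i))"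

definition vappend :: "nat \<Rightarrow> nat \<Rightarrow> (nat \<Rightarrow> 'a) \<Rightarrow> (nat \<Rightarrow> 'a) \<Rightarrow> nat \<Rightarrow> 'a" where
  "vappend m k a y = (\<lambda>i. if i < m then a i else if i < m + k then y (i - m) else undefined)"

definition mat_rank :: "'r set \<Rightarrow> 'c set \<Rightarrow> ('r \<Rightarrow> 'c \<Rightarrow> 'a::field) \<Rightarrow> nat" where
  "mat_rank R Cs M = Max {card J | J. J \<subseteq> Cs \<and> finite J \<and>
      (\<forall>a. (\<forall>r\<in>R. (\<Sum>j\<in>J. a j * M r j) = 0) \<longrightarrow> (\<forall>j\<in>J. a j = 0))}"

end

theory Submission
  imports Defs "HOL-Computational_Algebra.Polynomial" HOL.Vector_Spaces "HOL-Library.Function_Algebras"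
begin


lemma sum_fun_app: "(\<Sum>w\<in>t. f w) q = (\<Sum>w\<in>t. f w q)"
  by (induction t rule: infinite_finite_induct) auto

lemma indep_count:
  fixes v :: "'i \<Rightarrow> 'q \<Rightarrow> 'a::field"
  assumes fI: "finite I" and fQ: "finite Q"
   and supp: "\<forall>x\<in>I. \<forall>q. q \<notin> Q \<longrightarrow> v x q = 0"
   and ind: "\<forall>c. (\<forall>q\<in>Q. (\<Sum>x\<in>I. c x * v x q) = 0) \<longrightarrow> (\<forall>x\<in>I. c x = 0)"
  shows "card I \<le> card Q"
proof -
  interpret vs: vector_space "\<lambda>(c::'a) (f::'q\<Rightarrow>'a). (\<lambda>q. c * f q)"
    by unfold_locales (auto simp: fun_eq_iff algebra_simps)
  have inj: "inj_on v I"
  proof (rule inj_onI, rule ccontr)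
    fix x y assume xy: "x \<in> I" "y \<in> I" "v x = v y" "x \<noteq> y"
    define c where "c z = (if z = x then 1 else if z = y then -1 else (0::'a))" for z
    have "\<forall>q\<in>Q. (\<Sum>z\<in>I. c z * v z q) = 0"
    proof
      fix q
      have "(\<Sum>z\<in>I. c z * v z q) = (\<Sum>z\<in>{x,y}. c z * v z q)"
        using xy fI by (intro sum.mono_neutral_right) (auto simp: c_def)
      also have "\<dots> = 0" using xy by (simp add: c_def)
      finally show "(\<Sum>z\<in>I. c z * v z q) = 0" .
    qed
    hence "c x = 0" using ind xy by blast
    thus False by (simp add: c_def)
  qed
  have indep: "vs.independent (v ` I)"
    unfolding vs.independent_explicit_finite_subsets
  proof (intro allI impI)
    fix t u assume t: "t \<subseteq> v ` I" "finite t" and s: "(\<Sum>w\<in>t. (\<lambda>q. u w * w q)) = 0"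
    define c where "c x = (if v x \<in> t then u (v x) else 0)" for x
    have "\<forall>q\<in>Q. (\<Sum>x\<in>I. c x * v x q) = 0"
    proof
      fix q
      have "(\<Sum>x\<in>I. c x * v x q) = (\<Sum>x\<in>I \<inter> v -` t. u (v x) * v x q)"
        using fI by (intro sum.mono_neutral_cong_right) (auto simp: c_def)
      also have "\<dots> = (\<Sum>w\<in>v ` (I \<inter> v -` t). u w * w q)"
        using inj by (subst sum.reindex) (auto intro: inj_on_subset)
      also have "v ` (I \<inter> v -` t) = t" using t by auto
      also have "(\<Sum>w\<in>t. u w * w q) = (\<Sum>w\<in>t. (\<lambda>q. u w * w q)) q" by (simp add: sum_fun_app)
      also have "\<dots> = 0" using s by simp
      finally show "(\<Sum>x\<in>I. c x * v x q) = 0" .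
    qed
    with ind have c0: "\<forall>x\<in>I. c x = 0" by blast
    show "\<forall>w\<in>t. u w = 0"
    proof
      fix w assume "w \<in> t"
      then obtain x where "x \<in> I" "w = v x" using t by auto
      with c0 \<open>w \<in> t\<close> show "u w = 0" by (auto simp: c_def)
    qed
  qed
  define \<delta> where "\<delta> s = (\<lambda>q. if q = s then 1 else (0::'a))" for s :: 'q
  have sp: "v ` I \<subseteq> vs.span (\<delta> ` Q)"
  proof
    fix w assume "w \<in> v ` I"
    then obtain x where x: "x \<in> I" "w = v x" by auto
    have "w = (\<Sum>s\<in>Q. (\<lambda>q. v x s * \<delta> s q))"
    proof
      fix q
      show "w q = (\<Sum>s\<in>Q. (\<lambda>q. v x s * \<delta> s q)) q"
        unfolding sum_fun_app using x supp fQ by (cases "q \<in> Q") (auto simp: \<delta>_def if_distrib[of "times _"] sum.delta cong: if_cong)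
    qed
    also have "\<dots> \<in> vs.span (\<delta> ` Q)"
      by (intro vs.span_sum vs.span_scale vs.span_base) auto
    finally show "w \<in> vs.span (\<delta> ` Q)" .
  qed
  have "card (v ` I) \<le> card (\<delta> ` Q)"
    using vs.independent_span_bound[OF _ indep sp] fQ by auto
  also have "\<dots> \<le> card Q" using fQ card_image_le by blast
  finally show ?thesis using card_image[OF inj] by simp
qed


definition pc :: "nat \<Rightarrow> (nat \<Rightarrow> 'a::field poly) \<Rightarrow> (nat \<Rightarrow> nat) \<Rightarrow> 'a" where
 "pc n ps e = (if (\<forall>i. n \<le> i \<longrightarrow> e i = 0) then (\<Prod>i<n. coeff (ps i) (e i)) else 0)"

lemma PiE_lt: "f \<in> {0..<n} \<rightarrow>\<^sub>E A \<Longrightarrow> (i::nat) < n \<Longrightarrow> f i \<in> A"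
  by (auto simp: PiE_iff)

lemma pc_support:
  assumes "pc n ps e \<noteq> 0"
  shows "(\<forall>i<n. e i \<le> degree (ps i)) \<and> (\<forall>i. n \<le> i \<longrightarrow> e i = 0)"
proof -
  have z: "\<forall>i. n \<le> i \<longrightarrow> e i = 0" using assms by (auto simp: pc_def split: if_splits)
  have "\<forall>i<n. coeff (ps i) (e i) \<noteq> 0" using assms z by (auto simp: pc_def)
  hence "\<forall>i<n. e i \<le> degree (ps i)" using le_degree by blast
  with z show ?thesis by blast
qed

lemma pc_ipolys:
  assumes "\<forall>i<m. degree (ps i) \<le> d" "\<forall>i. m \<le> i \<and> i < m + k \<longrightarrow> degree (ps i) \<le> d'"
  shows "pc (m+k) ps \<in> ipolys m k d d'"
  unfolding ipolys_def
proof (intro CollectI allI impI)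
  fix e assume h: "pc (m + k) ps e \<noteq> 0"
  note s = pc_support[OF h]
  have 1: "\<forall>i<m. e i \<le> d"
  proof (intro allI impI)
    fix i assume "i < m"
    hence "e i \<le> degree (ps i)" "degree (ps i) \<le> d" using s assms(1) by auto
    thus "e i \<le> d" by linarith
  qed
  have 2: "\<forall>i. m \<le> i \<and> i < m + k \<longrightarrow> e i \<le> d'"
  proof (intro allI impI)
    fix i assume "m \<le> i \<and> i < m + k"
    hence "e i \<le> degree (ps i)" "degree (ps i) \<le> d'" using s assms(2) by auto
    thus "e i \<le> d'" by linarith
  qed
  show "e \<in> exps m k d d'" unfolding exps_def using 1 2 s by blast
qed

lemma pc_eval: "peval n (pc n ps) x = (\<Prod>i<n. poly (ps i) (x i))"
proof -
  define P where "P = PiE {..<n} (\<lambda>i. {..degree (ps i)})"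
  define xt where "xt g = (\<lambda>i. if i < n then g i else (0::nat))" for g :: "nat \<Rightarrow> nat"
  have inj: "inj_on xt P"
  proof (rule inj_onI)
    fix g g' assume h: "g \<in> P" "g' \<in> P" "xt g = xt g'"
    show "g = g'"
    proof
      fix i show "g i = g' i"
      proof (cases "i < n")
        case True thus ?thesis using fun_cong[OF h(3), of i] by (simp add: xt_def)
      next
        case False
        hence "i \<notin> {..<n}" by simp
        thus ?thesis using PiE_arb[OF h(1)[unfolded P_def]] PiE_arb[OF h(2)[unfolded P_def]] by metis
      qed
    qed
  qed
  have fP: "finite P" unfolding P_def by (intro finite_PiE) auto
  have fE: "finite (xt ` P)" using fP by blast
  have supp: "{e. pc n ps e \<noteq> 0} \<subseteq> xt ` P"
  proof
    fix e assume "e \<in> {e. pc n ps e \<noteq> 0}"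
    hence s: "(\<forall>i<n. e i \<le> degree (ps i))" "(\<forall>i. n \<le> i \<longrightarrow> e i = 0)" using pc_support[of n ps e] by auto
    have "restrict e {..<n} \<in> P" unfolding P_def restrict_PiE_iff using s(1) by simp
    moreover have "e = xt (restrict e {..<n})"
    proof
      fix i show "e i = xt (restrict e {..<n}) i"
        using s(2) by (cases "i < n") (simp_all add: xt_def)
    qed
    ultimately show "e \<in> xt ` P" by blast
  qed
  have "peval n (pc n ps) x = (\<Sum>e\<in>xt ` P. pc n ps e * (\<Prod>i<n. x i ^ e i))"
    unfolding peval_def by (rule sum.mono_neutral_left[OF fE supp]) simp
  also have "\<dots> = (\<Sum>g\<in>P. pc n ps (xt g) * (\<Prod>i<n. x i ^ xt g i))"
    using inj by (simp add: sum.reindex)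
  also have "\<dots> = (\<Sum>g\<in>P. (\<Prod>i<n. coeff (ps i) (g i) * x i ^ g i))"
  proof (rule sum.cong[OF refl])
    fix g assume "g \<in> P"
    have "pc n ps (xt g) = (\<Prod>i<n. coeff (ps i) (g i))"
      unfolding pc_def by (simp add: xt_def)
    moreover have "(\<Prod>i<n. x i ^ xt g i) = (\<Prod>i<n. x i ^ g i)"
      by (rule prod.cong) (simp_all add: xt_def)
    ultimately show "pc n ps (xt g) * (\<Prod>i<n. x i ^ xt g i) = (\<Prod>i<n. coeff (ps i) (g i) * x i ^ g i)"
      by (simp add: prod.distrib)
  qed
  also have "\<dots> = (\<Prod>i<n. \<Sum>j\<le>degree (ps i). coeff (ps i) j * x i ^ j)"
    unfolding P_def by (rule prod_sum_PiE[symmetric]) auto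
  also have "\<dots> = (\<Prod>i<n. poly (ps i) (x i))"
    by (simp add: poly_altdef)
  finally show ?thesis .
qed

lemma prod_split_add: "(\<Prod>i<m+(k::nat). f i) = (\<Prod>i<m. f i) * (\<Prod>j<k. (f (m+j)::'a::comm_monoid_mult))"
  by (induction k) (auto simp: mult.assoc)



definition vp :: "'a::field set \<Rightarrow> 'a poly" where "vp A = (\<Prod>h\<in>A. [:-h, 1:])"

lemma poly_vp: "poly (vp A) x = (\<Prod>h\<in>A. x - h)"
  by (simp add: vp_def poly_prod)

lemma vp_zero: "finite A \<Longrightarrow> poly (vp A) x = 0 \<longleftrightarrow> x \<in> A"
  by (simp add: poly_vp)

lemma degree_vp: "finite A \<Longrightarrow> degree (vp A) \<le> card A"
proof -
  assume f: "finite A"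
  have "degree (vp A) \<le> (\<Sum>h\<in>A. degree [:-h, 1::'a:])"
    unfolding vp_def using degree_prod_sum_le[OF f, of "\<lambda>h. [:-h, 1:]"] by (simp add: o_def)
  also have "\<dots> = card A" by simp
  finally show ?thesis .
qed

definition lag :: "'a::field set \<Rightarrow> 'a \<Rightarrow> 'a poly" where
  "lag K b = smult (inverse (\<Prod>h\<in>K-{b}. b - h)) (vp (K-{b}))"

lemma lag_same: "finite K \<Longrightarrow> poly (lag K b) b = 1"
proof -
  assume f: "finite K"
  have "(\<Prod>h\<in>K-{b}. b - h) \<noteq> 0" using f by (simp add: prod_zero_iff)
  thus ?thesis by (simp add: lag_def poly_vp)
qed

lemma lag_other: "finite K \<Longrightarrow> x \<in> K \<Longrightarrow> x \<noteq> b \<Longrightarrow> poly (lag K b) x = 0"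
  by (simp add: lag_def vp_zero)

lemma degree_lag: "finite K \<Longrightarrow> b \<in> K \<Longrightarrow> degree (lag K b) \<le> card K - 1"
  unfolding lag_def using degree_vp[of "K - {b}"] by (simp add: card_Diff_singleton)

lemma lag_indicator:
  fixes m :: nat
  assumes "finite K" "\<beta>0 \<in> {0..<m} \<rightarrow>\<^sub>E K" "\<beta> \<in> {0..<m} \<rightarrow>\<^sub>E K"
  shows "(\<Prod>i<m. poly (lag K (\<beta>0 i)) (\<beta> i)) = (if \<beta> = \<beta>0 then 1 else 0)"
proof (cases "\<beta> = \<beta>0")
  case True thus ?thesis using assms by (simp add: lag_same)
next
  case False
  then obtain i where i: "\<beta> i \<noteq> \<beta>0 i" by auto
  hence "i < m" using assms by (metis PiE_arb atLeastLessThan_iff zero_le)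
  hence "\<beta> i \<in> K" using assms(3) by (rule PiE_lt[rotated])
  hence "poly (lag K (\<beta>0 i)) (\<beta> i) = 0" by (rule lag_other[OF assms(1) _ i])
  hence "(\<Prod>i<m. poly (lag K (\<beta>0 i)) (\<beta> i)) = 0" using \<open>i < m\<close> by (intro prod_zero) auto
  thus ?thesis using False by simp
qed

lemma Gsum:
  assumes "finite G" "T \<subseteq> G" "g' \<in> T" "g \<in> T"
  shows "(\<Sum>y\<in>G. poly (vp (G-{g'}) * vp (T-{g})) y)
          = (if g = g' then poly (vp (G-{g'}) * vp (T-{g'})) g' else 0)"
proof -
  have fT: "finite T" using assms finite_subset by blast
  have "(\<Sum>y\<in>G. poly (vp (G-{g'}) * vp (T-{g})) y)
      = poly (vp (G-{g'}) * vp (T-{g})) g' + (\<Sum>y\<in>G-{g'}. poly (vp (G-{g'}) * vp (T-{g})) y)"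
    using assms by (subst sum.remove[of _ g']) auto
  also have "(\<Sum>y\<in>G-{g'}. poly (vp (G-{g'}) * vp (T-{g})) y) = 0"
    using assms by (intro sum.neutral) (auto simp: vp_zero)
  finally show ?thesis using assms fT by (auto simp: vp_zero)
qed

lemma Gsum_nz:
  assumes "finite G" "T \<subseteq> G" "g' \<in> T"
  shows "poly (vp (G-{g'}) * vp (T-{g'})) g' \<noteq> 0"
proof -
  have fT: "finite T" using assms finite_subset by blast
  thus ?thesis using assms by (auto simp: vp_zero)
qed



lemma pairing:
  fixes G K L :: "'a::field set"
    and m k d d' l :: nat
    and S :: "(nat \<Rightarrow> 'a) set"
    and C D :: "(nat \<Rightarrow> 'a) \<Rightarrow> nat \<Rightarrow> 'a"
    and B :: "(nat \<Rightarrow> 'a) \<Rightarrow> (nat \<Rightarrow> 'a) \<Rightarrow> 'a"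
  assumes fG: "finite G" and fK: "finite K" and TG: "T \<subseteq> G"
    and cG: "card G \<le> d' + 2" and cK: "card K = d + 1"
    and cT: "card T \<le> d' + 2 - card G"
    and hyp: "\<forall>Z \<in> ipolys m k d d'. \<forall>i \<in> {1..l}.
        (\<Sum>\<alpha>\<in>{0..<m} \<rightarrow>\<^sub>E L. C \<alpha> i * (\<Sum>y\<in>{0..<k} \<rightarrow>\<^sub>E G. peval (m+k) Z (vappend m k \<alpha> y)))
        = (\<Sum>q\<in>S. D q i * peval (m+k) Z q)"
    and B_def: "\<forall>\<alpha> \<in> {0..<m} \<rightarrow>\<^sub>E L. \<forall>p \<in> ipolys m 0 d 0.
        peval m p \<alpha> = (\<Sum>\<beta>\<in>{0..<m} \<rightarrow>\<^sub>E K. B \<beta> \<alpha> * peval m p \<beta>)"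
    and b0: "\<beta>0 \<in> {0..<m} \<rightarrow>\<^sub>E K"
    and g0: "g0 \<in> {0..<k} \<rightarrow>\<^sub>E T" and g: "g \<in> {0..<k} \<rightarrow>\<^sub>E T"
    and i: "i \<in> {1..l}"
  shows "(\<Sum>q\<in>S. (D q i * (\<Prod>j<k. poly (vp (T - {g j})) (q (m+j))))
             * ((\<Prod>i<m. poly (lag K (\<beta>0 i)) (q i)) * (\<Prod>j<k. poly (vp (G - {g0 j})) (q (m+j)))))
       = (if g = g0 then (\<Prod>j<k. poly (vp (G-{g0 j}) * vp (T-{g0 j})) (g0 j)) else 0)
          * (\<Sum>\<alpha>\<in>{0..<m} \<rightarrow>\<^sub>E L. B \<beta>0 \<alpha> * C \<alpha> i)"
proof -
  have fT: "finite T" using fG TG finite_subset by blast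
  define ps where "ps i' = (if i' < m then lag K (\<beta>0 i')
                    else vp (G - {g0 (i'-m)}) * vp (T - {g (i'-m)}))" for i'
  define Z where "Z = pc (m+k) ps"
  define A where "A x = (\<Prod>i<m. poly (lag K (\<beta>0 i)) (x i))" for x :: "nat \<Rightarrow> 'a"
  define F where "F j y = poly (vp (G - {g0 j}) * vp (T - {g j})) y" for j y
  have Zin: "Z \<in> ipolys m k d d'"
    unfolding Z_def
  proof (rule pc_ipolys)
    show "\<forall>i<m. degree (ps i) \<le> d"
    proof (intro allI impI)
      fix i' assume "i' < m"
      hence "\<beta>0 i' \<in> K" by (rule PiE_lt[OF b0])
      hence "degree (lag K (\<beta>0 i')) \<le> card K - 1" by (rule degree_lag[OF fK])
      thus "degree (ps i') \<le> d" using \<open>i' < m\<close> cK by (simp add: ps_def)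
    qed
    show "\<forall>i. m \<le> i \<and> i < m + k \<longrightarrow> degree (ps i) \<le> d'"
    proof (intro allI impI)
      fix i' assume h: "m \<le> i' \<and> i' < m + k"
      hence j: "i' - m < k" by auto
      have a1: "g0 (i'-m) \<in> T" by (rule PiE_lt[OF g0 j])
      have a2: "g (i'-m) \<in> T" by (rule PiE_lt[OF g j])
      note a = a1 a2
      hence aG: "g0 (i'-m) \<in> G" using TG by auto
      have "degree (ps i') \<le> degree (vp (G - {g0 (i'-m)})) + degree (vp (T - {g (i'-m)}))"
        using h by (simp add: ps_def degree_mult_le)
      also have "\<dots> \<le> card (G - {g0 (i'-m)}) + card (T - {g (i'-m)})"
        using fG fT by (intro add_mono degree_vp) auto
      also have "\<dots> = (card G - 1) + (card T - 1)"
        using a aG fG fT by (simp add: card_Diff_singleton)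
      also have "\<dots> \<le> d'"
      proof -
        have "card T \<ge> 1" using a fT by (metis One_nat_def Suc_leI card_gt_0_iff empty_iff)
        moreover have "card G \<ge> 1" using aG fG by (metis One_nat_def Suc_leI card_gt_0_iff empty_iff)
        ultimately show ?thesis using cT cG by linarith
      qed
      finally show "degree (ps i') \<le> d'" .
    qed
  qed
  have ev: "peval (m+k) Z x = A x * (\<Prod>j<k. F j (x (m+j)))" for x
    unfolding Z_def pc_eval prod_split_add A_def F_def by (simp add: ps_def)
  have Fsum: "(\<Sum>y\<in>G. F j y) = (if g j = g0 j then poly (vp (G-{g0 j}) * vp (T-{g0 j})) (g0 j) else 0)"
    if "j < k" for j
  proof -
    have "g0 j \<in> T" by (rule PiE_lt[OF g0 that])
    moreover have "g j \<in> T" by (rule PiE_lt[OF g that])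
    ultimately show ?thesis unfolding F_def using Gsum[OF fG TG, of "g0 j" "g j"] by (auto simp: eq_commute)
  qed
  have prodF: "(\<Prod>j<k. \<Sum>y\<in>G. F j y) = (if g = g0 then (\<Prod>j<k. poly (vp (G-{g0 j}) * vp (T-{g0 j})) (g0 j)) else 0)"
  proof (cases "g = g0")
    case True
    have "(\<Prod>j<k. \<Sum>y\<in>G. F j y) = (\<Prod>j<k. poly (vp (G-{g0 j}) * vp (T-{g0 j})) (g0 j))"
      by (rule prod.cong) (auto simp: Fsum True)
    thus ?thesis using True by simp
  next
    case False
    then obtain j where jj: "g j \<noteq> g0 j" by auto
    hence "j < k" using g g0 by (metis PiE_arb atLeastLessThan_iff zero_le)
    hence "(\<Prod>j<k. \<Sum>y\<in>G. F j y) = 0" using Fsum jj by (intro prod_zero) auto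
    thus ?thesis using False by simp
  qed
  have ysum: "(\<Sum>y\<in>{0..<k} \<rightarrow>\<^sub>E G. peval (m+k) Z (vappend m k \<alpha> y)) = A \<alpha> * (\<Prod>j<k. \<Sum>y\<in>G. F j y)" for \<alpha>
  proof -
    have "(\<Sum>y\<in>{0..<k} \<rightarrow>\<^sub>E G. peval (m+k) Z (vappend m k \<alpha> y))
        = (\<Sum>y\<in>{..<k} \<rightarrow>\<^sub>E G. A \<alpha> * (\<Prod>j<k. F j (y j)))"
      unfolding ev atLeast0LessThan
      by (intro sum.cong refl arg_cong2[where f=times] prod.cong) (auto simp: A_def vappend_def)
    also have "\<dots> = A \<alpha> * (\<Prod>j<k. \<Sum>y\<in>G. F j y)"
      by (simp add: sum_distrib_left[symmetric] prod_sum_PiE fG)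
    finally show ?thesis .
  qed
  have Aeq: "A \<alpha> = B \<beta>0 \<alpha>" if "\<alpha> \<in> {0..<m} \<rightarrow>\<^sub>E L" for \<alpha>
  proof -
    have dl: "\<forall>i<m. degree (lag K (\<beta>0 i)) \<le> d"
    proof (intro allI impI)
      fix i' assume "i' < m"
      hence "\<beta>0 i' \<in> K" by (rule PiE_lt[OF b0])
      hence "degree (lag K (\<beta>0 i')) \<le> card K - 1" by (rule degree_lag[OF fK])
      thus "degree (lag K (\<beta>0 i')) \<le> d" using cK by simp
    qed
    have pin: "pc m (\<lambda>i. lag K (\<beta>0 i)) \<in> ipolys m 0 d 0"
      using pc_ipolys[of m "\<lambda>i. lag K (\<beta>0 i)" d 0 0] dl by simp
    have "A \<alpha> = peval m (pc m (\<lambda>i. lag K (\<beta>0 i))) \<alpha>" by (simp add: pc_eval A_def)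
    also have "\<dots> = (\<Sum>\<beta>\<in>{0..<m} \<rightarrow>\<^sub>E K. B \<beta> \<alpha> * peval m (pc m (\<lambda>i. lag K (\<beta>0 i))) \<beta>)"
      using B_def that pin by blast
    also have "\<dots> = (\<Sum>\<beta>\<in>{0..<m} \<rightarrow>\<^sub>E K. if \<beta> = \<beta>0 then B \<beta> \<alpha> else 0)"
      by (intro sum.cong refl) (auto simp: pc_eval lag_indicator[OF fK b0])
    also have "\<dots> = B \<beta>0 \<alpha>" using b0 fK by (simp add: finite_PiE)
    finally show ?thesis .
  qed
  have lhs: "(\<Sum>\<alpha>\<in>{0..<m} \<rightarrow>\<^sub>E L. C \<alpha> i * (\<Sum>y\<in>{0..<k} \<rightarrow>\<^sub>E G. peval (m+k) Z (vappend m k \<alpha> y)))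
      = (\<Prod>j<k. \<Sum>y\<in>G. F j y) * (\<Sum>\<alpha>\<in>{0..<m} \<rightarrow>\<^sub>E L. B \<beta>0 \<alpha> * C \<alpha> i)"
    unfolding ysum sum_distrib_left
    by (intro sum.cong refl) (simp add: Aeq mult_ac)
  have rhs: "(\<Sum>q\<in>S. D q i * peval (m+k) Z q)
     = (\<Sum>q\<in>S. (D q i * (\<Prod>j<k. poly (vp (T - {g j})) (q (m+j))))
             * ((\<Prod>i<m. poly (lag K (\<beta>0 i)) (q i)) * (\<Prod>j<k. poly (vp (G - {g0 j})) (q (m+j)))))"
    unfolding ev A_def F_def poly_mult prod.distrib by (intro sum.cong refl) (simp add: mult_ac)
  show ?thesis using hyp Zin i lhs rhs prodF by simp
qed



theorem lemma8p1:
  fixes G K L :: "'a::field set"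
    and m k d d' l :: nat
    and S :: "(nat \<Rightarrow> 'a) set"
    and C :: "(nat \<Rightarrow> 'a) \<Rightarrow> nat \<Rightarrow> 'a"
    and D :: "(nat \<Rightarrow> 'a) \<Rightarrow> nat \<Rightarrow> 'a"
    and B :: "(nat \<Rightarrow> 'a) \<Rightarrow> (nat \<Rightarrow> 'a) \<Rightarrow> 'a"
  assumes "finite G" and "finite K" and "finite L" and "K \<subseteq> L"
    and "card G \<le> d' + 2"
    and "card K = d + 1"
    and "finite S" and "S \<subseteq> {0..<m+k} \<rightarrow>\<^sub>E UNIV"
    and hyp: "\<forall>Z \<in> ipolys m k d d'. \<forall>i \<in> {1..l}.
        (\<Sum>\<alpha>\<in>{0..<m} \<rightarrow>\<^sub>E L. C \<alpha> i * (\<Sum>y\<in>{0..<k} \<rightarrow>\<^sub>E G. peval (m+k) Z (vappend m k \<alpha> y)))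
        = (\<Sum>q\<in>S. D q i * peval (m+k) Z q)"
    and B_def: "\<forall>\<alpha> \<in> {0..<m} \<rightarrow>\<^sub>E L. \<forall>p \<in> ipolys m 0 d 0.
        peval m p \<alpha> = (\<Sum>\<beta>\<in>{0..<m} \<rightarrow>\<^sub>E K. B \<beta> \<alpha> * peval m p \<beta>)"
  shows "card S \<ge> mat_rank ({0..<m} \<rightarrow>\<^sub>E K) {1..l}
                     (\<lambda>\<beta> i. \<Sum>\<alpha>\<in>{0..<m} \<rightarrow>\<^sub>E L. B \<beta> \<alpha> * C \<alpha> i)
                   * (min (d' + 2 - card G) (card G)) ^ k"
proof -
  define BC where "BC \<beta> i = (\<Sum>\<alpha>\<in>{0..<m} \<rightarrow>\<^sub>E L. B \<beta> \<alpha> * C \<alpha> i)" for \<beta> i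
  define R where "R = {card J | J. J \<subseteq> {1..l} \<and> finite J \<and>
      (\<forall>a. (\<forall>r\<in>{0..<m} \<rightarrow>\<^sub>E K. (\<Sum>j\<in>J. a j * BC r j) = 0) \<longrightarrow> (\<forall>j\<in>J. a j = 0))}"
  have rk: "mat_rank ({0..<m} \<rightarrow>\<^sub>E K) {1..l} (\<lambda>\<beta> i. \<Sum>\<alpha>\<in>{0..<m} \<rightarrow>\<^sub>E L. B \<beta> \<alpha> * C \<alpha> i) = Max R"
    unfolding mat_rank_def R_def BC_def by simp
  have "R \<subseteq> card ` Pow {1..l}" unfolding R_def by auto
  hence finR: "finite R" by (rule finite_subset) simp
  have "0 \<in> R" unfolding R_def by (auto intro!: exI[of _ "{}"])
  hence "Max R \<in> R" using finR by (intro Max_in) auto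
  then obtain J where J: "J \<subseteq> {1..l}" "finite J" "card J = Max R"
    and Jind: "\<forall>a. (\<forall>r\<in>{0..<m} \<rightarrow>\<^sub>E K. (\<Sum>j\<in>J. a j * BC r j) = 0) \<longrightarrow> (\<forall>j\<in>J. a j = 0)"
    unfolding R_def by auto
  define t where "t = min (d' + 2 - card G) (card G)"
  obtain T where T: "T \<subseteq> G" "card T = t" "finite T"
    using obtain_subset_with_card_n[of t G] by (auto simp: t_def)
  have cT: "card T \<le> d' + 2 - card G" using T by (simp add: t_def)
  define P where "P = {0..<k} \<rightarrow>\<^sub>E T"
  define I where "I = J \<times> P"
  define v where "v x q = (if q \<in> S then D q (fst x) * (\<Prod>j<k. poly (vp (T - {snd x j})) (q (m+j))) else 0)"
    for x :: "nat \<times> (nat \<Rightarrow> 'a)" and q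
  have finP: "finite P" unfolding P_def using T by (intro finite_PiE) auto
  have cardI: "card I = card J * t^k"
    unfolding I_def P_def using T J by (simp add: card_cartesian_product card_PiE)
  have "card I \<le> card S"
  proof (rule indep_count)
    show "finite I" unfolding I_def using J finP by simp
    show "finite S" by fact
    show "\<forall>x\<in>I. \<forall>q. q \<notin> S \<longrightarrow> v x q = 0" by (simp add: v_def)
    show "\<forall>c. (\<forall>q\<in>S. (\<Sum>x\<in>I. c x * v x q) = 0) \<longrightarrow> (\<forall>x\<in>I. c x = 0)"
    proof (intro allI impI ballI)
      fix c x assume hc: "\<forall>q\<in>S. (\<Sum>x\<in>I. c x * v x q) = 0" and x: "x \<in> I"
      obtain i0 g0 where x0: "x = (i0, g0)" "i0 \<in> J" "g0 \<in> P" using x unfolding I_def by auto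
      define \<kappa> where "\<kappa> = (\<Prod>j<k. poly (vp (G-{g0 j}) * vp (T-{g0 j})) (g0 j))"
      have g0P: "g0 \<in> {0..<k} \<rightarrow>\<^sub>E T" using x0 P_def by simp
      have "\<forall>j<k. poly (vp (G-{g0 j}) * vp (T-{g0 j})) (g0 j) \<noteq> 0"
      proof (intro allI impI)
        fix j assume "j < k"
        hence "g0 j \<in> T" by (rule PiE_lt[OF g0P])
        thus "poly (vp (G-{g0 j}) * vp (T-{g0 j})) (g0 j) \<noteq> 0" by (rule Gsum_nz[OF assms(1) T(1)])
      qed
      hence \<kappa>nz: "\<kappa> \<noteq> 0" unfolding \<kappa>_def by simp
      have "\<forall>\<beta>0\<in>{0..<m} \<rightarrow>\<^sub>E K. (\<Sum>i\<in>J. c (i,g0) * BC \<beta>0 i) = 0"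
      proof
        fix \<beta>0 assume b0: "\<beta>0 \<in> {0..<m} \<rightarrow>\<^sub>E K"
        define w where "w q = (\<Prod>i<m. poly (lag K (\<beta>0 i)) (q i)) * (\<Prod>j<k. poly (vp (G - {g0 j})) (q (m+j)))" for q
        have pr: "(\<Sum>q\<in>S. v (i,g) q * w q) = (if g = g0 then \<kappa> else 0) * BC \<beta>0 i" if "i\<in>J" "g\<in>P" for i g
        proof -
          have iin: "i \<in> {1..l}" using that J by auto
          have gP: "g \<in> {0..<k} \<rightarrow>\<^sub>E T" using that P_def by simp
          have "(\<Sum>q\<in>S. v (i,g) q * w q) = (\<Sum>q\<in>S. (D q i * (\<Prod>j<k. poly (vp (T - {g j})) (q (m+j))))
             * ((\<Prod>i<m. poly (lag K (\<beta>0 i)) (q i)) * (\<Prod>j<k. poly (vp (G - {g0 j})) (q (m+j)))))"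
            by (intro sum.cong refl) (simp add: v_def w_def)
          also have "\<dots> = (if g = g0 then \<kappa> else 0) * BC \<beta>0 i"
            unfolding \<kappa>_def BC_def
            by (rule pairing[OF assms(1) assms(2) T(1) assms(5) assms(6) cT hyp B_def b0 g0P gP iin])
          finally show ?thesis .
        qed
        have "0 = (\<Sum>q\<in>S. (\<Sum>x\<in>I. c x * v x q) * w q)" using hc by simp
        also have "\<dots> = (\<Sum>x\<in>I. c x * (\<Sum>q\<in>S. v x q * w q))"
          by (simp add: sum_distrib_left sum_distrib_right mult.assoc sum.swap[of _ S])
        also have "\<dots> = (\<Sum>(i,g)\<in>J \<times> P. c (i,g) * ((if g = g0 then \<kappa> else 0) * BC \<beta>0 i))"
          unfolding I_def by (intro sum.cong refl) (auto simp: pr)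
        also have "\<dots> = (\<Sum>i\<in>J. \<Sum>g\<in>P. c (i,g) * ((if g = g0 then \<kappa> else 0) * BC \<beta>0 i))"
          by (simp add: sum.cartesian_product)
        also have "\<dots> = (\<Sum>i\<in>J. c (i,g0) * (\<kappa> * BC \<beta>0 i))"
        proof (rule sum.cong[OF refl])
          fix i assume "i \<in> J"
          have "(\<Sum>g\<in>P. c (i,g) * ((if g = g0 then \<kappa> else 0) * BC \<beta>0 i))
              = (\<Sum>g\<in>P. if g = g0 then c (i,g0) * (\<kappa> * BC \<beta>0 i) else 0)"
            by (intro sum.cong refl) auto
          also have "\<dots> = c (i,g0) * (\<kappa> * BC \<beta>0 i)" using finP x0 by (simp add: sum.delta')
          finally show "(\<Sum>g\<in>P. c (i,g) * ((if g = g0 then \<kappa> else 0) * BC \<beta>0 i)) = c (i,g0) * (\<kappa> * BC \<beta>0 i)" .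
        qed
        also have "\<dots> = \<kappa> * (\<Sum>i\<in>J. c (i,g0) * BC \<beta>0 i)"
          by (simp add: sum_distrib_left mult_ac)
        finally show "(\<Sum>i\<in>J. c (i,g0) * BC \<beta>0 i) = 0" using \<kappa>nz by simp
      qed
      hence "\<forall>j\<in>J. c (j,g0) = 0" using Jind[THEN spec, of "\<lambda>i. c (i,g0)"] by simp
      thus "c x = 0" using x0 by simp
    qed
  qed
  thus ?thesis using rk J cardI by (simp add: t_def)
qed


end
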